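(* Let $m,n>-1/2$, $\alpha_1,\alpha_2>0$, $0\le|\beta_i|<\alpha_i$ ($i=1,2$), let $X\sim\mathrm{VG}(m,\alpha_1,\beta_1,0)$, $Y\sim\mathrm{VG}(n,\alpha_2,\beta_2,0)$ be independent and $Z=XY$ with density $f_Z$. Let $D=\frac{\sqrt\pi\,\gamma_1^{2m+1}\gamma_2^{2n+1}}{(2\alpha_1)^{m+1/2}(2\alpha_2)^{n+1/2}\Gamma(m+1/2)\Gamma(n+1/2)}$. Then as $z\to\infty$, \[ f_Z(z)\sim D\,z^{\frac14(2m+2n-3)}\Big((\lambda_1^-)^{\frac14(2n-2m-1)}(\lambda_2^-)^{\frac14(2m-2n-1)}e^{-2\sqrt{\lambda_1^-\lambda_2^-z}}+(\lambda_1^+)^{\frac14(2n-2m-1)}(\lambda_2^+)^{\frac14(2m-2n-1)}e^{-2\sqrt{\lambda_1^+\lambda_2^+z}}\Big), \] and as $z\to-\infty$, \[ f_Z(z)\sim D\,(-z)^{\frac14(2m+2n-3)}\Big((\lambda_1^-)^{\frac14(2n-2m-1)}(\lambda_2^+)^{\frac14(2m-2n-1)}e^{-2\sqrt{-\lambda_1^-\lambda_2^+z}}+(\lambda_1^+)^{\frac14(2n-2m-1)}(\lambda_2^-)^{\frac14(2m-2n-1)}e^{-2\sqrt{-\lambda_1^+\lambda_2^-z}}\Big). \]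
   Context: For $\mu>-1/2$, $\alpha>0$ and $0\le|\beta|<\alpha$, $\mathrm{VG}(\mu,\alpha,\beta,0)$ denotes the variance-gamma distribution on $\mathbb{R}$ with probability density function $f(x)=\frac{(\alpha^2-\beta^2)^{\mu+1/2}}{\sqrt{\pi}(2\alpha)^{\mu}\Gamma(\mu+1/2)}e^{\beta x}|x|^{\mu}K_{\mu}(\alpha|x|)$, where $K_\nu$ is the modified Bessel function of the second kind. Notation: $\gamma_i=\sqrt{\alpha_i^2-\beta_i^2}$, $\lambda_i^{\pm}=\alpha_i\pm\beta_i$. $a(z)\sim b(z)$ means $a(z)/b(z)\to1$. *)

theory Defs
  imports "HOL-Analysis.Analysis" "HOL-Library.Landau_Symbols"
begin

text \<open>Modified Bessel function of the second kind, via the standard integral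
  representation K_nu(x) = int_0^infinity exp(-x cosh t) cosh(nu t) dt, valid for x > 0.\<close>
definition besselK :: "real \<Rightarrow> real \<Rightarrow> real" where
  "besselK \<nu> x = (LBINT t:{0..}. exp (- x * cosh t) * cosh (\<nu> * t))"

definition vg_pdf :: "real \<Rightarrow> real \<Rightarrow> real \<Rightarrow> real \<Rightarrow> real" where
  "vg_pdf \<mu> \<alpha> \<beta> x =
     (\<alpha>\<^sup>2 - \<beta>\<^sup>2) powr (\<mu> + 1/2) / (sqrt pi * (2 * \<alpha>) powr \<mu> * Gamma (\<mu> + 1/2))
     * exp (\<beta> * x) * \<bar>x\<bar> powr \<mu> * besselK \<mu> (\<alpha> * \<bar>x\<bar>)"

definition product_pdf :: "(real \<Rightarrow> real) \<Rightarrow> (real \<Rightarrow> real) \<Rightarrow> real \<Rightarrow> real" where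
  "product_pdf fX fY z = (LINT x|lborel. fX x * fY (z / x) / \<bar>x\<bar>)"

end

theory Submission
  imports Defs "HOL-Probability.Distributions" "HOL-Real_Asymp.Real_Asymp"
begin

lemma cosh_meas[measurable]: "(cosh :: real \<Rightarrow> real) \<in> borel_measurable borel"
  by (intro borel_measurable_continuous_onI continuous_intros)

lemma besselK_meas[measurable]: "(\<lambda>y. besselK \<nu> y) \<in> borel_measurable borel"
  unfolding besselK_def set_lebesgue_integral_def
  by measurable

lemma cosh_ge_sq: "t\<^sup>2 / 2 \<le> cosh t - 1" for t :: real
proof -
  have *: "s\<^sup>2 / 2 \<le> cosh s - 1" if "s \<ge> 0" for s :: real
  proof -
    have "(\<lambda>x. cosh x - 1 - x\<^sup>2/2) 0 \<le> (\<lambda>x. cosh x - 1 - x\<^sup>2/2) s"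
    proof (rule DERIV_nonneg_imp_nondecreasing[OF that])
      fix x :: real assume x: "0 \<le> x" "x \<le> s"
      have "DERIV (\<lambda>x. cosh x - 1 - x\<^sup>2/2) x :> sinh x - x"
        by (auto intro!: derivative_eq_intros)
      moreover have "sinh x - x \<ge> 0"
        using real_le_x_sinh[OF x(1)] by (simp add: sinh_def exp_minus)
      ultimately show "\<exists>y. DERIV (\<lambda>x. cosh x - 1 - x\<^sup>2/2) x :> y \<and> y \<ge> 0" by blast
    qed
    then show ?thesis by simp
  qed
  show ?thesis
  proof (cases "t \<ge> 0")
    case True then show ?thesis using * by blast
  next
    case False then show ?thesis using *[of "-t"] by simp
  qed
qed

lemma cosh_abs_real: "cosh \<bar>x\<bar> = cosh (x::real)"
  by (cases "x \<ge> 0") auto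

lemma cosh_le_exp_abs: "cosh x \<le> exp \<bar>x\<bar>" for x :: real
proof -
  have "exp (-\<bar>x\<bar>) \<le> exp \<bar>x\<bar>" by simp
  then show ?thesis using cosh_abs_real[of x] unfolding cosh_def by (simp add: exp_minus)
qed

definition kint :: "real \<Rightarrow> real \<Rightarrow> real \<Rightarrow> real" where
  "kint \<nu> y w = indicator {0..} w * (exp (-(y * (cosh (w / sqrt y) - 1))) * cosh (\<nu> * w / sqrt y))"

lemma kint_meas[measurable]: "kint \<nu> y \<in> borel_measurable borel"
  unfolding kint_def by measurable

lemma besselK_repr:
  assumes y: "y > 0"
  shows "exp y * sqrt y * besselK \<nu> y = (LINT w|lborel. kint \<nu> y w)"
proof -
  have sy: "sqrt y > 0" using y by simp
  have "besselK \<nu> y = (LINT t|lborel. indicator {0..} t * (exp (- y * cosh t) * cosh (\<nu> * t)))"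
    unfolding besselK_def set_lebesgue_integral_def by simp
  also have "\<dots> = (1 / sqrt y) * (LINT w|lborel. indicator {0..} (0 + (1/sqrt y) * w) *
        (exp (- y * cosh (0 + (1/sqrt y) * w)) * cosh (\<nu> * (0 + (1/sqrt y) * w))))"
    using lborel_integral_real_affine[where c="1/sqrt y" and t=0 and
        f="\<lambda>t. indicator {0..} t * (exp (- y * cosh t) * cosh (\<nu> * t))"] sy by simp
  finally have "exp y * sqrt y * besselK \<nu> y = (LINT w|lborel. exp y * (indicator {0..} (0 + (1/sqrt y) * w) *
        (exp (- y * cosh (0 + (1/sqrt y) * w)) * cosh (\<nu> * (0 + (1/sqrt y) * w)))))"
    using sy by (simp add: integral_mult_right_zero)
  also have "\<dots> = (LINT w|lborel. kint \<nu> y w)"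
  proof (intro Bochner_Integration.integral_cong refl)
    fix w
    have i: "indicator {0..} (0 + (1/sqrt y) * w) = (indicator {0..} w :: real)"
      using sy by (auto simp: indicator_def zero_le_mult_iff zero_le_divide_iff)
    have e: "exp y * exp (- y * cosh (w / sqrt y)) = exp (-(y * (cosh (w / sqrt y) - 1)))"
      by (simp add: exp_add[symmetric] algebra_simps)
    show "exp y * (indicator {0..} (0 + (1/sqrt y) * w) *
        (exp (- y * cosh (0 + (1/sqrt y) * w)) * cosh (\<nu> * (0 + (1/sqrt y) * w)))) = kint \<nu> y w"
      unfolding kint_def i using e by (simp add: field_simps)
  qed
  finally show ?thesis .
qed

lemma kint_nonneg: "kint \<nu> y w \<ge> 0"
  unfolding kint_def by (auto intro!: mult_nonneg_nonneg simp: indicator_def)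

lemma kint_bound:
  assumes y: "y \<ge> 1"
  shows "kint \<nu> y w \<le> exp (\<nu>\<^sup>2) * (indicator {0..} w * exp (- (w/2)\<^sup>2))"
proof (cases "w \<ge> 0")
  case False then show ?thesis by (simp add: kint_def)
next
  case True
  have sy: "sqrt y \<ge> 1" using y by simp
  have "(w / sqrt y)\<^sup>2 / 2 \<le> cosh (w / sqrt y) - 1" by (rule cosh_ge_sq)
  then have "y * ((w / sqrt y)\<^sup>2 / 2) \<le> y * (cosh (w / sqrt y) - 1)"
    using y by (intro mult_left_mono) auto
  moreover have "y * ((w / sqrt y)\<^sup>2 / 2) = w\<^sup>2/2" using y by (simp add: power_divide)
  ultimately have e1: "exp (-(y * (cosh (w / sqrt y) - 1))) \<le> exp (-(w\<^sup>2/2))" by simp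
  have "\<bar>\<nu> * w / sqrt y\<bar> \<le> \<bar>\<nu> * w\<bar>"
  proof -
    have "\<bar>\<nu> * w / sqrt y\<bar> = \<bar>\<nu> * w\<bar> / sqrt y" using sy by simp
    also have "\<dots> \<le> \<bar>\<nu> * w\<bar> / 1" using sy by (intro divide_left_mono) auto
    finally show ?thesis by simp
  qed
  then have "cosh (\<nu> * w / sqrt y) \<le> cosh (\<nu> * w)"
    using cosh_real_nonneg_le_iff[of "\<bar>\<nu> * w / sqrt y\<bar>" "\<bar>\<nu> * w\<bar>"] by (simp only: cosh_abs_real abs_ge_zero simp_thms)
  also have "\<dots> \<le> exp \<bar>\<nu> * w\<bar>" by (rule cosh_le_exp_abs)
  finally have e2: "cosh (\<nu> * w / sqrt y) \<le> exp (\<bar>\<nu>\<bar> * w)" using True by (simp add: abs_mult)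
  have "kint \<nu> y w \<le> exp (-(w\<^sup>2/2)) * exp (\<bar>\<nu>\<bar> * w)"
    unfolding kint_def using True e1 e2 by (auto intro!: mult_mono)
  also have "\<dots> = exp (-(w\<^sup>2/2) + \<bar>\<nu>\<bar> * w)" by (simp only: exp_add)
  also have "\<dots> \<le> exp (\<nu>\<^sup>2 - (w/2)\<^sup>2)"
  proof -
    have "0 \<le> (w/2 - \<bar>\<nu>\<bar>)\<^sup>2" by simp
    then have "-(w\<^sup>2/2) + \<bar>\<nu>\<bar> * w \<le> \<nu>\<^sup>2 - (w/2)\<^sup>2"
      by (simp add: power2_eq_square algebra_simps)
    then show ?thesis by simp
  qed
  also have "\<dots> = exp (\<nu>\<^sup>2) * (indicator {0..} w * exp (- (w/2)\<^sup>2))"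
    using True by (simp only: diff_conv_add_uminus exp_add) simp
  finally show ?thesis .
qed

lemma gauss_half_integrable: "integrable lborel (\<lambda>w. indicator {0..} w * exp (- (w/2)\<^sup>2) :: real)"
proof -
  have "integrable lborel (\<lambda>x. indicator {0..} x *\<^sub>R exp (- x\<^sup>2) :: real)"
    using gaussian_moment_0 by (auto simp: has_bochner_integral_iff)
  from lborel_integrable_real_affine[OF this, of "1/2" 0]
  have "integrable lborel (\<lambda>w. indicator {0..} (0 + 1/2 * w) *\<^sub>R exp (- (0 + 1/2 * w)\<^sup>2) :: real)" by simp
  moreover have "\<And>w. indicator {0..} (0 + 1/2 * w::real) = (indicator {0..} w :: real)"
    by (auto simp: indicator_def)
  ultimately show ?thesis by simp
qed

lemma gauss_sqrt2_integral: "(LINT w|lborel. indicator {0..} w * exp (- (w\<^sup>2/2)) :: real) = sqrt (pi/2)"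
proof -
  have "integral\<^sup>L lborel (\<lambda>x. indicator {0..} x *\<^sub>R exp (- x\<^sup>2) :: real) = sqrt pi / 2"
    using gaussian_moment_0 by (rule has_bochner_integral_integral_eq)
  moreover have "integral\<^sup>L lborel (\<lambda>x. indicator {0..} x *\<^sub>R exp (- x\<^sup>2) :: real) =
     \<bar>1/sqrt 2\<bar> *\<^sub>R integral\<^sup>L lborel (\<lambda>w. indicator {0..} (0 + (1/sqrt 2) * w) *\<^sub>R exp (- (0 + (1/sqrt 2) * w)\<^sup>2) :: real)"
    by (rule lborel_integral_real_affine) simp
  moreover have "\<And>w. indicator {0..} (0 + (1/sqrt 2) * w) *\<^sub>R exp (- (0 + (1/sqrt 2) * w)\<^sup>2) =
      (indicator {0..} w * exp (- (w\<^sup>2/2)) :: real)"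
    by (auto simp: indicator_def power_divide zero_le_divide_iff)
  ultimately have "sqrt pi / 2 = (1/sqrt 2) * (LINT w|lborel. indicator {0..} w * exp (- (w\<^sup>2/2)) :: real)"
    by simp
  then have "(LINT w|lborel. indicator {0..} w * exp (- (w\<^sup>2/2)) :: real) = sqrt 2 * sqrt pi / 2"
    by (simp add: field_simps)
  also have "\<dots> = sqrt (pi/2)"
  proof -
    have "sqrt 2 * sqrt 2 = (2::real)" by simp
    then show ?thesis by (simp add: real_sqrt_divide field_simps)
  qed
  finally show ?thesis .
qed

lemma pow_fact_le_exp: assumes "x \<ge> 0" shows "x ^ k / fact k \<le> exp (x::real)"
proof -
  have "sum (\<lambda>n. x ^ n /\<^sub>R fact n) {k} \<le> suminf (\<lambda>n. x ^ n /\<^sub>R fact n)"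
    using assms summable_exp_generic[of x] by (intro sum_le_suminf) auto
  then show ?thesis by (simp add: exp_def divide_inverse ac_simps)
qed

lemma pow_exp_integrable: "integrable lborel (\<lambda>x::real. indicator {0..} x * (x^k * exp (-x)))"
proof (rule integrableI_nonneg)
  show "(\<lambda>x::real. indicator {0..} x * (x^k * exp (-x))) \<in> borel_measurable lborel" by measurable
  show "AE x in lborel. 0 \<le> indicator {0..} x * (x^k * exp (-x::real))"
    by (intro AE_I2) (auto simp: indicator_def)
  have "(\<integral>\<^sup>+x. ennreal (indicator {0..} x * (x^k * exp (-x))) \<partial>lborel) =
        (\<integral>\<^sup>+x. ennreal (x^k * exp (-x)) * indicator {0 ..} x \<partial>lborel)"
    by (intro nn_integral_cong) (auto simp: indicator_def)
  also have "\<dots> = real_of_nat (fact k)" by (rule nn_intergal_power_times_exp_Ici)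
  finally show "(\<integral>\<^sup>+x. ennreal (indicator {0..} x * (x^k * exp (-x))) \<partial>lborel) < \<infinity>" by simp
qed

lemma kint_integrable: "y \<ge> 1 \<Longrightarrow> integrable lborel (kint \<nu> y)"
  apply (rule Bochner_Integration.integrable_bound[where f="\<lambda>w. exp (\<nu>\<^sup>2) * (indicator {0..} w * exp (- (w/2)\<^sup>2))"])
  using gauss_half_integrable kint_bound kint_nonneg by auto

lemma Ek_lim: "((\<lambda>y. exp y * sqrt y * besselK \<nu> y) \<longlongrightarrow> sqrt (pi/2)) at_top"
proof -
  have lim: "((\<lambda>y. LINT w|lborel. kint \<nu> y w) \<longlongrightarrow> (LINT w|lborel. indicator {0..} w * exp (- (w\<^sup>2/2)))) at_top"
  proof (rule integral_dominated_convergence_at_top[where w="\<lambda>w. exp (\<nu>\<^sup>2) * (indicator {0..} w * exp (- (w/2)\<^sup>2))"])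
    show "integrable lborel (\<lambda>w. exp (\<nu>\<^sup>2) * (indicator {0..} w * exp (- (w/2)\<^sup>2)))"
      using gauss_half_integrable by auto
    show "(\<lambda>w. indicator {0..} w * exp (- (w\<^sup>2/2)) :: real) \<in> borel_measurable lborel" by measurable
    show "\<And>t. kint \<nu> t \<in> borel_measurable lborel" by measurable
    show "\<forall>\<^sub>F i in at_top. AE x in lborel. norm (kint \<nu> i x) \<le> exp (\<nu>\<^sup>2) * (indicator {0..} x * exp (- (x/2)\<^sup>2))"
      using eventually_ge_at_top[of "1::real"]
      by eventually_elim (auto simp: kint_nonneg kint_bound)
    show "AE x in lborel. ((\<lambda>i. kint \<nu> i x) \<longlongrightarrow> indicator {0..} x * exp (- (x\<^sup>2/2))) at_top"
    proof (rule AE_I2)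
      fix w :: real
      show "((\<lambda>i. kint \<nu> i w) \<longlongrightarrow> indicator {0..} w * exp (- (w\<^sup>2/2))) at_top"
      proof (cases "w \<ge> 0")
        case False then show ?thesis by (simp add: kint_def)
      next
        case True
        have "((\<lambda>y. exp (-(y * (cosh (w / sqrt y) - 1))) * cosh (\<nu> * w / sqrt y)) \<longlongrightarrow> exp (- (w*w/2))) at_top"
          by real_asymp
        then have "((\<lambda>y. exp (-(y * (cosh (w / sqrt y) - 1))) * cosh (\<nu> * w / sqrt y)) \<longlongrightarrow> exp (- (w\<^sup>2/2))) at_top"
          by (simp add: power2_eq_square)
        from tendsto_mult_left[OF this, of "indicator {0..} w"]
        show ?thesis unfolding kint_def by simp
      qed
    qed
  qed
  have ev: "\<forall>\<^sub>F y in at_top. (LINT w|lborel. kint \<nu> y w) = exp y * sqrt y * besselK \<nu> y"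
    using eventually_gt_at_top[of "0::real"] by eventually_elim (simp add: besselK_repr)
  show ?thesis using Lim_transform_eventually[OF lim ev] gauss_sqrt2_integral by simp
qed

lemma Ek_bound_large: "\<exists>C. \<forall>y\<ge>1. exp y * sqrt y * besselK \<nu> y \<le> C"
proof -
  let ?C = "LINT w|lborel. exp (\<nu>\<^sup>2) * (indicator {0..} w * exp (- (w/2)\<^sup>2))"
  have "exp y * sqrt y * besselK \<nu> y \<le> ?C" if "y \<ge> 1" for y
  proof -
    have "exp y * sqrt y * besselK \<nu> y = (LINT w|lborel. kint \<nu> y w)" using that by (simp add: besselK_repr)
    also have "\<dots> \<le> ?C"
      using that gauss_half_integrable kint_integrable kint_bound by (intro integral_mono) auto
    finally show ?thesis .
  qed
  then show ?thesis by blast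
qed

lemma besselK_nonneg: "besselK \<nu> y \<ge> 0"
  unfolding besselK_def set_lebesgue_integral_def
  by (intro integral_nonneg_AE AE_I2) (auto simp: indicator_def)

lemma besselK_bound_small:
  "\<exists>C (k::nat). \<forall>y::real. 0 < y \<longrightarrow> besselK \<nu> y \<le> C * (1/y) ^ k"
proof -
  define k where "k = Suc (nat \<lceil>\<bar>\<nu>\<bar>\<rceil>)"
  have k: "real k \<ge> \<bar>\<nu>\<bar> + 1" unfolding k_def by linarith
  define C :: real where "C = fact k * 2 ^ k * exp 1"
  let ?g = "\<lambda>t. indicator {0..} t * (t^0 * exp (- t)) :: real"
  have "besselK \<nu> y \<le> (C * (1/y)^k) * (LINT t|lborel. ?g t)" if y: "y > 0" for y
  proof -
    have bnd: "indicator {0..} t * (exp (- y * cosh t) * cosh (\<nu> * t)) \<le> (C * (1/y)^k) * ?g t" for t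
    proof (cases "t \<ge> 0")
      case False then show ?thesis by simp
    next
      case t: True
      have "cosh t \<ge> exp t / 2" by (simp add: cosh_def)
      then have "exp (- y * cosh t) \<le> exp (- (y * exp t / 2))"
        using y by (simp add: mult_left_mono)
      also have "\<dots> \<le> fact k / (y * exp t / 2) ^ k"
      proof -
        have "(y * exp t / 2) ^ k / fact k \<le> exp (y * exp t / 2)"
          using y by (intro pow_fact_le_exp) auto
        then show ?thesis using y
          by (simp add: exp_minus field_simps)
      qed
      also have "\<dots> = fact k * 2 ^ k * (1/y)^k * exp (- (real k * t))"
        using y by (simp add: power_divide power_mult_distrib exp_of_nat_mult[symmetric] exp_minus field_simps)
      finally have e1: "exp (- y * cosh t) \<le> fact k * 2 ^ k * (1/y)^k * exp (- (real k * t))" .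
      have e2: "cosh (\<nu> * t) \<le> exp (\<bar>\<nu>\<bar> * t)"
        using cosh_le_exp_abs[of "\<nu> * t"] t by (simp add: abs_mult)
      have "exp (- y * cosh t) * cosh (\<nu> * t) \<le> fact k * 2 ^ k * (1/y)^k * exp (- (real k * t)) * exp (\<bar>\<nu>\<bar> * t)"
        using e1 e2 y by (intro mult_mono) auto
      also have "\<dots> = fact k * 2 ^ k * (1/y)^k * exp (- (real k * t) + \<bar>\<nu>\<bar> * t)"
        by (simp only: exp_add mult.assoc)
      also have "\<dots> \<le> fact k * 2 ^ k * (1/y)^k * exp (1 - t)"
      proof -
        have "1 * t \<le> (real k - \<bar>\<nu>\<bar>) * t" using k t by (intro mult_right_mono) auto
        then have "- (real k * t) + \<bar>\<nu>\<bar> * t \<le> - t" by (simp add: algebra_simps)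
        also have "- t \<le> 1 - t" by simp
        finally show ?thesis using y by (intro mult_left_mono) auto
      qed
      also have "\<dots> = (C * (1/y)^k) * ?g t"
        using t by (simp only: C_def diff_conv_add_uminus exp_add) simp
      finally show ?thesis using t by simp
    qed
    have int: "integrable lborel (\<lambda>t. indicator {0..} t * (exp (- y * cosh t) * cosh (\<nu> * t)) :: real)"
    proof (rule Bochner_Integration.integrable_bound[where f="\<lambda>t. (C * (1/y)^k) * ?g t"])
      show "integrable lborel (\<lambda>t. (C * (1/y)^k) * ?g t)" using pow_exp_integrable[of 0] by simp
      show "(\<lambda>t. indicator {0..} t * (exp (- y * cosh t) * cosh (\<nu> * t)) :: real) \<in> borel_measurable lborel"
        by measurable
      have Cn: "0 \<le> C" by (simp add: C_def)
      show "AE t in lborel. norm (indicator {0..} t * (exp (- y * cosh t) * cosh (\<nu> * t)) :: real) \<le> norm ((C * (1/y)^k) * ?g t)"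
      proof (rule AE_I2)
        fix t
        have "0 \<le> indicator {0..} t * (exp (- y * cosh t) * cosh (\<nu> * t))" by auto
        moreover have "0 \<le> (C * (1/y)^k) * ?g t" using Cn y by (auto simp: indicator_def)
        ultimately show "norm (indicator {0..} t * (exp (- y * cosh t) * cosh (\<nu> * t)) :: real) \<le> norm ((C * (1/y)^k) * ?g t)"
          using bnd[of t] by simp
      qed
    qed
    have "besselK \<nu> y = (LINT t|lborel. indicator {0..} t * (exp (- y * cosh t) * cosh (\<nu> * t)))"
      unfolding besselK_def set_lebesgue_integral_def by simp
    also have "\<dots> \<le> (LINT t|lborel. (C * (1/y)^k) * ?g t)"
      using int pow_exp_integrable[of 0] bnd by (intro integral_mono) auto
    finally show ?thesis by simp
  qed
  then have "\<forall>y. 0 < y \<longrightarrow> besselK \<nu> y \<le> (C * (LINT t|lborel. ?g t)) * (1/y) ^ k"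
    by (simp add: ac_simps)
  then show ?thesis by blast
qed

definition Ek :: "real \<Rightarrow> real \<Rightarrow> real" where
  "Ek \<nu> y = exp y * sqrt y * besselK \<nu> y"

lemma Ek_meas[measurable]: "Ek \<nu> \<in> borel_measurable borel"
  unfolding Ek_def by measurable

lemma Ek_nonneg: "y \<ge> 0 \<Longrightarrow> Ek \<nu> y \<ge> 0"
  unfolding Ek_def using besselK_nonneg by simp

lemma Ek_bound: "\<exists>C (k::nat). C \<ge> 0 \<and> (\<forall>y>0. Ek \<nu> y \<le> C * (1 + (1/y)^k))"
proof -
  obtain C1 where C1: "\<And>y. y \<ge> 1 \<Longrightarrow> Ek \<nu> y \<le> C1"
    using Ek_bound_large[of \<nu>] unfolding Ek_def by blast
  obtain C2 and k :: nat where C2: "\<And>y. 0 < y \<Longrightarrow> besselK \<nu> y \<le> C2 * (1/y)^k"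
    using besselK_bound_small[of \<nu>] by blast
  define C where "C = max C1 0 + exp 1 * max C2 0"
  have "Ek \<nu> y \<le> C * (1 + (1/y)^k)" if y: "y > 0" for y
  proof (cases "y \<ge> 1")
    case True
    have "Ek \<nu> y \<le> max C1 0" using C1[OF True] by simp
    also have "\<dots> \<le> C" unfolding C_def by simp
    also have "\<dots> \<le> C * (1 + (1/y)^k)"
      using mult_left_mono[of 1 "1 + (1/y)^k" C] y unfolding C_def by simp
    finally show ?thesis .
  next
    case False
    have "besselK \<nu> y \<le> max C2 0 * (1/y)^k" using C2[OF y] y
      by (smt (verit) mult_right_mono zero_le_power zero_le_divide_1_iff)
    moreover have "exp y \<le> exp 1" "sqrt y \<le> 1" using False by auto
    ultimately have "Ek \<nu> y \<le> exp 1 * 1 * (max C2 0 * (1/y)^k)" unfolding Ek_def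
      using y besselK_nonneg[of \<nu> y] by (intro mult_mono) auto
    also have "\<dots> \<le> C * (1/y)^k"
    proof -
      have "exp 1 * max C2 0 \<le> C" unfolding C_def by simp
      from mult_right_mono[OF this, of "(1/y)^k"] y show ?thesis by (simp add: mult.assoc)
    qed
    also have "\<dots> \<le> C * (1 + (1/y)^k)" unfolding C_def by (intro mult_left_mono) auto
    finally show ?thesis .
  qed
  moreover have "C \<ge> 0" unfolding C_def by simp
  ultimately show ?thesis by blast
qed

lemma F_alt:
  fixes u y a b c d p q :: real
  assumes u: "u > 0" and y: "y > 0" and a: "a > 0" and c: "c > 0"
  shows "u powr p * exp (b*u) * besselK p (a*u) * (y powr q * exp (d*y) * besselK q (c*y)) / u =
    a powr (-1/2) * c powr (-1/2) * u powr (p - 1/2) * y powr (q - 1/2) *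
    exp (-((a-b)*u + (c-d)*y)) * Ek p (a*u) * Ek q (c*y) / u"
proof -
  have K: "besselK \<nu> (e*x) = Ek \<nu> (e*x) * exp (-(e*x)) * (e powr (-1/2) * x powr (-1/2))"
    if "e > 0" "x > 0" for \<nu> e x :: real
  proof -
    have "sqrt (e*x) = e powr (1/2) * x powr (1/2)"
      using that by (simp add: powr_half_sqrt less_imp_le real_sqrt_mult)
    then have "e powr (-1/2) * x powr (-1/2) * sqrt (e*x) = 1"
      using that by (simp add: powr_minus field_simps)
    then show ?thesis unfolding Ek_def using that
      by (simp add: exp_minus field_simps)
  qed
  have pu: "u powr p * u powr (-1/2) = u powr (p - 1/2)" by (simp add: powr_add[symmetric])
  have py: "y powr q * y powr (-1/2) = y powr (q - 1/2)" by (simp add: powr_add[symmetric])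
  have ex: "exp (b*u) * exp (-(a*u)) * (exp (d*y) * exp (-(c*y))) = exp (-((a-b)*u + (c-d)*y))"
    by (simp add: mult_exp_exp algebra_simps)
  show ?thesis
    unfolding K[OF a u] K[OF c y]
    unfolding pu[symmetric] py[symmetric] ex[symmetric] by (simp only: mult_ac)
qed

lemma subst_id:
  fixes p q a b c d z v w :: real
  assumes a: "a > 0" and c: "c > 0" and l: "a - b > 0" and m: "c - d > 0" and z: "z > 0" and v: "v > 0"
    and vw: "v = 1 + w / sqrt (sqrt ((a-b) * (c-d)) * sqrt z)"
  shows "(sqrt ((c-d)/(a-b)) * sqrt z / sqrt (sqrt ((a-b) * (c-d)) * sqrt z)) *
     ((sqrt ((c-d)/(a-b)) * sqrt z * v) powr p * exp (b * (sqrt ((c-d)/(a-b)) * sqrt z * v)) * besselK p (a * (sqrt ((c-d)/(a-b)) * sqrt z * v)) *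
      ((z/(sqrt ((c-d)/(a-b)) * sqrt z * v)) powr q * exp (d * (z/(sqrt ((c-d)/(a-b)) * sqrt z * v))) * besselK q (c * (z/(sqrt ((c-d)/(a-b)) * sqrt z * v))))
      / (sqrt ((c-d)/(a-b)) * sqrt z * v))
   = (a powr (-1/2) * c powr (-1/2) * sqrt ((c-d)/(a-b)) powr (p-q) * sqrt z powr (p+q-1) *
        exp (-2 * (sqrt ((a-b) * (c-d)) * sqrt z)) * (sqrt ((a-b) * (c-d)) * sqrt z) powr (-1/2)) *
     (v powr (p-q-1) * exp (-(w\<^sup>2/v)) * Ek p (a * (sqrt ((c-d)/(a-b)) * sqrt z * v)) *
        Ek q (c * (z/(sqrt ((c-d)/(a-b)) * sqrt z * v))))"
proof -
  define l where "l = a - b"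
  define m where "m = c - d"
  define s where "s = sqrt z"
  define \<kappa> where "\<kappa> = sqrt (m/l)"
  define R where "R = sqrt (l * m) * s"
  define u where "u = \<kappa> * s * v"
  define y where "y = z / u"
  have l0: "l > 0" and m0: "m > 0" using l m by (auto simp: l_def m_def)
  have s0: "s > 0" and k0: "\<kappa> > 0" and R0: "R > 0" using z l0 m0 by (auto simp: s_def \<kappa>_def R_def)
  have u0: "u > 0" using s0 k0 v by (simp add: u_def)
  have zs: "z = s * s" using z by (simp add: s_def)
  have y_eq: "y = s / (\<kappa> * v)" using s0 k0 v by (simp add: y_def u_def zs)
  have y0: "y > 0" using y_eq s0 k0 v by simp
  have vw': "v = 1 + w / sqrt R" using vw by (simp add: R_def l_def m_def s_def)
  have F: "u powr p * exp (b * u) * besselK p (a * u) * (y powr q * exp (d * y) * besselK q (c * y)) / u =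
    a powr (-1/2) * c powr (-1/2) * u powr (p - 1/2) * y powr (q - 1/2) *
    exp (-((a-b) * u + (c-d) * y)) * Ek p (a * u) * Ek q (c * y) / u"
    by (rule F_alt[OF u0 y0 a c])
  have pu: "u powr (p - 1/2) = \<kappa> powr (p - 1/2) * s powr (p - 1/2) * v powr (p - 1/2)"
    using k0 s0 v by (simp add: u_def powr_mult)
  have py: "y powr (q - 1/2) = s powr (q - 1/2) / (\<kappa> powr (q - 1/2) * v powr (q - 1/2))"
    using k0 s0 v by (simp add: y_eq powr_mult powr_divide)
  have k1: "\<kappa> powr (p - 1/2) / \<kappa> powr (q - 1/2) = \<kappa> powr (p - q)"
    using k0 by (simp add: powr_diff[symmetric])
  have k2: "s powr (p - 1/2) * s powr (q - 1/2) = s powr (p + q - 1)"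
    using s0 by (simp add: powr_add[symmetric])
  have k3: "v powr (p - 1/2) / v powr (q - 1/2) / v = v powr (p - q - 1)"
  proof -
    have "v powr (p - 1/2) / v powr (q - 1/2) = v powr (p - q)" by (simp add: powr_diff[symmetric])
    moreover have "v powr (p - q - 1) = v powr (p-q) / v powr 1" by (rule powr_diff)
    ultimately show ?thesis using v by simp
  qed
  have k4: "(\<kappa> * s / sqrt R) / u = R powr (-1/2) / v"
    using k0 s0 R0 v by (simp add: u_def powr_minus powr_half_sqrt less_imp_le field_simps)
  have lk: "l * \<kappa> = sqrt (l * m)"
    using l0 m0 by (simp add: \<kappa>_def real_sqrt_divide real_sqrt_mult field_simps)
  have mk: "m / \<kappa> = sqrt (l * m)"
    using l0 m0 by (simp add: \<kappa>_def real_sqrt_divide real_sqrt_mult field_simps)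
  have k5: "l * u + m * y = 2 * R + w\<^sup>2/v"
  proof -
    have e1: "l * u = (l * \<kappa>) * s * v" by (simp add: u_def mult.assoc)
    have e2: "m * y = (m/\<kappa>) * s/v" using k0 v by (simp add: y_eq)
    have "l * u + m * y = R * v + R/v"
      unfolding e1 e2 lk mk R_def by simp
    also have "\<dots> = 2 * R + R * (v-1)\<^sup>2/v" using v by (simp add: field_simps power2_eq_square)
    also have "R * (v-1)\<^sup>2 = w\<^sup>2"
    proof -
      have "v - 1 = w / sqrt R" using vw' by simp
      then have "(v-1)\<^sup>2 = w\<^sup>2 / R" using R0 by (simp add: power_divide)
      then show ?thesis using R0 by simp
    qed
    finally show ?thesis .
  qed
  show ?thesis
    unfolding l_def[symmetric] m_def[symmetric] s_def[symmetric] \<kappa>_def[symmetric] R_def[symmetric]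
      u_def[symmetric] y_def[symmetric]
  proof -
    have "(\<kappa> * s / sqrt R) * (u powr p * exp (b * u) * besselK p (a * u) * (y powr q * exp (d * y) * besselK q (c * y)) / u)
       = a powr (-1/2) * c powr (-1/2) * (u powr (p - 1/2) * y powr (q - 1/2)) *
          exp (-(l * u + m * y)) * Ek p (a * u) * Ek q (c * y) * ((\<kappa> * s / sqrt R) / u)"
      unfolding F l_def m_def by (simp add: field_simps)
    also have "u powr (p - 1/2) * y powr (q - 1/2) = \<kappa> powr (p - q) * s powr (p + q - 1) * (v powr (p - 1/2) / v powr (q - 1/2))"
      unfolding pu py k1[symmetric] k2[symmetric] by (simp add: field_simps)
    also have "exp (-(l * u + m * y)) = exp (-2 * R) * exp (-(w\<^sup>2/v))"
      unfolding k5 by (simp add: exp_add[symmetric])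
    also note k4
    finally show "(\<kappa> * s / sqrt R) * (u powr p * exp (b * u) * besselK p (a * u) * (y powr q * exp (d * y) * besselK q (c * y)) / u) =
       (a powr (-1/2) * c powr (-1/2) * \<kappa> powr (p-q) * s powr (p+q-1) * exp (-2 * R) * R powr (-1/2)) *
       (v powr (p-q-1) * exp (-(w\<^sup>2/v)) * Ek p (a * u) * Ek q (c * y))"
      using k3[symmetric] by (simp add: field_simps)
  qed
qed

lemma max_inv1: "(v::real) \<ge> 1 \<Longrightarrow> max v (1/v) = v"
proof -
  assume v: "v \<ge> 1"
  then have "1/v \<le> 1" by simp
  then show ?thesis using v by (intro max_absorb1) linarith
qed

lemma max_inv2: "(v::real) > 0 \<Longrightarrow> v < 1 \<Longrightarrow> max v (1/v) = 1/v"
proof -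
  assume v: "v > 0" "v < 1"
  then have "1 < 1/v" by simp
  then show ?thesis using v by (intro max_absorb2) linarith
qed

lemma powr_le_M:
  fixes v r :: real assumes v: "v > 0"
  shows "v powr r \<le> (max v (1/v)) ^ (nat \<lceil>\<bar>r\<bar>\<rceil>)"
proof -
  define M where "M = max v (1/v)"
  have M1: "M \<ge> 1" unfolding M_def using v
    by (cases "v \<ge> 1") (auto simp: le_max_iff_disj le_divide_eq)
  have "v powr r \<le> M powr \<bar>r\<bar>"
  proof (cases "v \<ge> 1")
    case True
    then have "M = v" unfolding M_def by (rule max_inv1)
    then show ?thesis using True by (auto intro: powr_mono)
  next
    case False
    then have Mv: "M = 1/v" unfolding M_def using v by (intro max_inv2) auto
    have "v powr r = (1/v) powr (-r)" using v by (simp add: powr_minus_divide powr_divide)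
    also have "\<dots> \<le> (1/v) powr \<bar>r\<bar>" using False v by (intro powr_mono) auto
    finally show ?thesis using Mv by simp
  qed
  also have "\<dots> \<le> M powr (real (nat \<lceil>\<bar>r\<bar>\<rceil>))" using M1 by (intro powr_mono) auto
  also have "\<dots> = M ^ (nat \<lceil>\<bar>r\<bar>\<rceil>)" using M1 by (intro powr_realpow) auto
  finally show ?thesis unfolding M_def .
qed

lemma M_exp_bound:
  fixes R v w :: real and K :: nat
  assumes R: "R \<ge> 1" and vw: "v = 1 + w / sqrt R" and v: "v > 0"
  shows "(max v (1/v)) ^ K * exp (-(w\<^sup>2/v)) \<le> exp 1 * (2^K + 8^K * fact K) * ((1 + \<bar>w\<bar>^K) * exp (-\<bar>w\<bar>))"
proof -
  define M where "M = max v (1/v)"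
  have sR: "sqrt R \<ge> 1" using R by simp
  have pos: "0 \<le> (1 + \<bar>w\<bar>^K) * exp (-\<bar>w\<bar>)" by simp
  have ge1: "1 \<le> 1 + \<bar>w\<bar>^K" by simp
  show ?thesis
  proof (cases "w \<ge> 0")
    case True
    have v1: "v \<ge> 1" using vw True sR by simp
    have vle: "v \<le> 1 + w" using vw True sR by (simp add: divide_le_eq mult_le_cancel_left1)
    have "M = v" unfolding M_def using v1 by (rule max_inv1)
    then have "M ^ K \<le> (1 + w) ^ K" using vle v1 by (intro power_mono) auto
    also have "(1 + w) ^ K \<le> (2 * max 1 w) ^ K" using True by (intro power_mono) auto
    also have "\<dots> = 2^K * (max 1 w)^K" by (simp add: power_mult_distrib)
    also have "\<dots> \<le> 2^K * (1 + w^K)"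
      using True by (intro mult_left_mono) (auto simp: max_def)
    finally have a1: "M ^ K \<le> 2^K * (1 + \<bar>w\<bar>^K)" using True by simp
    have "w - 1 \<le> w\<^sup>2 / (1 + w)" using True by (simp add: field_simps power2_eq_square)
    also have "\<dots> \<le> w\<^sup>2 / v" using True v vle by (intro divide_left_mono) auto
    finally have "exp (-(w\<^sup>2/v)) \<le> exp 1 * exp (-\<bar>w\<bar>)" using True by (simp add: exp_add[symmetric])
    then have "M ^ K * exp (-(w\<^sup>2/v)) \<le> (2^K * (1 + \<bar>w\<bar>^K)) * (exp 1 * exp (-\<bar>w\<bar>))"
      using a1 by (intro mult_mono) auto
    also have "\<dots> \<le> exp 1 * (2^K + 8^K * fact K) * ((1 + \<bar>w\<bar>^K) * exp (-\<bar>w\<bar>))"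
      using pos by (simp add: algebra_simps)
    finally show ?thesis unfolding M_def .
  next
    case False
    have v1: "v < 1" using vw False sR by (simp add: divide_less_0_iff)
    have Mv: "M = 1/v" unfolding M_def using v1 v by (intro max_inv2) auto
    show ?thesis
    proof (cases "v \<ge> 1/2")
      case True
      have "M \<le> 2" using True v by (auto simp: Mv divide_le_eq)
      then have a1: "M ^ K \<le> 2 ^ K" using Mv v by (intro power_mono) auto
      have "\<bar>w\<bar> - 1 \<le> w\<^sup>2" using zero_le_power2[of "\<bar>w\<bar> - 1"]
        by (simp add: power2_eq_square algebra_simps)
      also have "w\<^sup>2 \<le> w\<^sup>2 / v"
      proof -
        have "w\<^sup>2 * v \<le> w\<^sup>2" using v1 by (intro mult_left_le) auto
        then show ?thesis using v by (simp add: le_divide_eq)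
      qed
      finally have "exp (-(w\<^sup>2/v)) \<le> exp 1 * exp (-\<bar>w\<bar>)" by (simp add: exp_add[symmetric])
      then have "M ^ K * exp (-(w\<^sup>2/v)) \<le> 2^K * (exp 1 * exp (-\<bar>w\<bar>))"
        using a1 by (intro mult_mono) auto
      also have "\<dots> \<le> exp 1 * (2^K + 8^K * fact K) * ((1 + \<bar>w\<bar>^K) * exp (-\<bar>w\<bar>))"
      proof -
        have "2^K * (exp 1 * exp (-\<bar>w\<bar>)) = exp 1 * 2^K * (1 * exp (-\<bar>w\<bar>))" by simp
        also have "\<dots> \<le> exp 1 * (2^K + 8^K * fact K) * ((1 + \<bar>w\<bar>^K) * exp (-\<bar>w\<bar>))"
          using ge1 by (intro mult_mono) auto
        finally show ?thesis .
      qed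
      finally show ?thesis unfolding M_def .
    next
      case False
      have w2: "w\<^sup>2 = R * (1 - v)\<^sup>2"
      proof -
        have "1 - v = - w / sqrt R" using vw by simp
        then have "(1 - v)\<^sup>2 = w\<^sup>2 / R" using R by (simp add: power_divide)
        then show ?thesis using R by simp
      qed
      have "(1/2)\<^sup>2 \<le> (1 - v)\<^sup>2" using False v by (intro power_mono) auto
      then have "1 * (1/4) \<le> R * (1 - v)\<^sup>2" using R by (intro mult_mono) (auto simp: power_divide)
      then have "1/4 \<le> w\<^sup>2" unfolding w2 by simp
      then have "M / 8 \<le> w\<^sup>2 / (2 * v)" using Mv v by (simp add: field_simps)
      moreover have "\<bar>w\<bar> - 1 \<le> w\<^sup>2 / (2 * v)"
      proof -
        have "\<bar>w\<bar> - 1 \<le> w\<^sup>2" using zero_le_power2[of "\<bar>w\<bar> - 1"]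
          by (simp add: power2_eq_square algebra_simps)
        also have "w\<^sup>2 \<le> w\<^sup>2 / (2 * v)"
        proof -
          have "w\<^sup>2 * (2 * v) \<le> w\<^sup>2" using False by (intro mult_left_le) auto
          then show ?thesis using v by (simp add: le_divide_eq)
        qed
        finally show ?thesis .
      qed
      ultimately have "M / 8 + (\<bar>w\<bar> - 1) \<le> w\<^sup>2/v" using v by (simp add: field_simps)
      then have e: "exp (-(w\<^sup>2/v)) \<le> exp (-(M/8)) * (exp 1 * exp (-\<bar>w\<bar>))"
        by (simp add: exp_add[symmetric] exp_diff[symmetric])
      have "(M/8)^K / fact K \<le> exp (M/8)" using Mv v by (intro pow_fact_le_exp) auto
      then have f: "M^K * exp (-(M/8)) \<le> 8^K * fact K"
        by (simp add: exp_minus field_simps power_divide)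
      have "M ^ K * exp (-(w\<^sup>2/v)) \<le> M^K * (exp (-(M/8)) * (exp 1 * exp (-\<bar>w\<bar>)))"
        using e Mv v by (intro mult_left_mono) auto
      also have "\<dots> = (M^K * exp (-(M/8))) * (exp 1 * exp (-\<bar>w\<bar>))" by simp
      also have "\<dots> \<le> (8^K * fact K) * (exp 1 * exp (-\<bar>w\<bar>))" using f by (intro mult_right_mono) auto
      also have "\<dots> \<le> exp 1 * (2^K + 8^K * fact K) * ((1 + \<bar>w\<bar>^K) * exp (-\<bar>w\<bar>))"
      proof -
        have "(8^K * fact K) * (exp 1 * exp (-\<bar>w\<bar>)) = exp 1 * (8^K * fact K) * (1 * exp (-\<bar>w\<bar>))" by simp
        also have "\<dots> \<le> exp 1 * (2^K + 8^K * fact K) * ((1 + \<bar>w\<bar>^K) * exp (-\<bar>w\<bar>))"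
          using ge1 by (intro mult_mono) auto
        finally show ?thesis .
      qed
      finally show ?thesis unfolding M_def .
    qed
  qed
qed

lemma G_integrable: "integrable lborel (\<lambda>w::real. (1 + \<bar>w\<bar>^K) * exp (-\<bar>w\<bar>))"
proof -
  define g where "g = (\<lambda>x::real. indicator {0..} x * (x^0 * exp (-x)) + indicator {0..} x * (x^K * exp (-x)))"
  have a: "integrable lborel (\<lambda>x::real. indicator {0..} x * (x^0 * exp (-x)))" by (rule pow_exp_integrable)
  have b: "integrable lborel (\<lambda>x::real. indicator {0..} x * (x^K * exp (-x)))" by (rule pow_exp_integrable)
  have gi: "integrable lborel g" unfolding g_def by (rule Bochner_Integration.integrable_add[OF a b])
  have gi': "integrable lborel (\<lambda>x. g (0 + (-1) * x))" using lborel_integrable_real_affine[OF gi, of "-1" 0] by simp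
  show ?thesis
  proof (rule Bochner_Integration.integrable_bound[where f="\<lambda>x. g x + g (0 + (-1) * x)"])
    show "integrable lborel (\<lambda>x. g x + g (0 + (-1) * x))" using gi gi' by auto
    show "(\<lambda>w::real. (1 + \<bar>w\<bar>^K) * exp (-\<bar>w\<bar>)) \<in> borel_measurable lborel" by measurable
    show "AE x in lborel. norm ((1 + \<bar>x\<bar>^K) * exp (-\<bar>x\<bar>)) \<le> norm (g x + g (0 + (-1) * x))"
    proof (rule AE_I2)
      fix x :: real
      have "0 \<le> g x" "0 \<le> g (-x)" unfolding g_def by (auto simp: indicator_def)
      moreover have "(1 + \<bar>x\<bar>^K) * exp (-\<bar>x\<bar>) \<le> g x + g (-x)"
        unfolding g_def by (cases "x \<ge> 0") (auto simp: indicator_def algebra_simps)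
      ultimately show "norm ((1 + \<bar>x\<bar>^K) * exp (-\<bar>x\<bar>)) \<le> norm (g x + g (0 + (-1) * x))" by simp
    qed
  qed
qed

definition kap :: "real \<Rightarrow> real \<Rightarrow> real \<Rightarrow> real \<Rightarrow> real" where
  "kap a b c d = sqrt ((c-d)/(a-b))"
definition Rr :: "real \<Rightarrow> real \<Rightarrow> real \<Rightarrow> real \<Rightarrow> real \<Rightarrow> real" where
  "Rr a b c d z = sqrt ((a-b) * (c-d)) * sqrt z"

definition Fint :: "real \<Rightarrow> real \<Rightarrow> real \<Rightarrow> real \<Rightarrow> real \<Rightarrow> real \<Rightarrow> real \<Rightarrow> real \<Rightarrow> real" where
  "Fint p a b q c d z u = indicator {0<..} u * (u powr p * exp (b * u) * besselK p (a * u) *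
      ((z / u) powr q * exp (d * (z / u)) * besselK q (c * (z / u))) / u)"

definition Pf :: "real \<Rightarrow> real \<Rightarrow> real \<Rightarrow> real \<Rightarrow> real \<Rightarrow> real \<Rightarrow> real \<Rightarrow> real" where
  "Pf p a b q c d z = a powr (-1/2) * c powr (-1/2) * kap a b c d powr (p-q) * sqrt z powr (p+q-1) *
        exp (-2 * Rr a b c d z) * Rr a b c d z powr (-1/2)"

definition Hfun :: "real \<Rightarrow> real \<Rightarrow> real \<Rightarrow> real \<Rightarrow> real \<Rightarrow> real \<Rightarrow> real \<Rightarrow> real \<Rightarrow> real" where
  "Hfun p a b q c d z w = (let v = 1 + w / sqrt (Rr a b c d z) in
     indicator {0<..} v * (v powr (p-q-1) * exp (-(w\<^sup>2/v)) * Ek p (a * (kap a b c d * sqrt z * v)) *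
        Ek q (c * (z / (kap a b c d * sqrt z * v)))))"

lemma Fint_meas[measurable]: "Fint p a b q c d z \<in> borel_measurable borel"
  unfolding Fint_def by measurable

lemma Hfun_meas[measurable]: "Hfun p a b q c d z \<in> borel_measurable borel"
  unfolding Hfun_def Let_def by measurable

context
  fixes p a b q c d :: real
  assumes a: "a > 0" and c: "c > 0" and l: "a - b > 0" and m: "c - d > 0"
begin

lemma G1:
  assumes z: "z > 0"
  shows "(kap a b c d * sqrt z / sqrt (Rr a b c d z)) *
           Fint p a b q c d z (kap a b c d * sqrt z + (kap a b c d * sqrt z / sqrt (Rr a b c d z)) * w)
         = Pf p a b q c d z * Hfun p a b q c d z w"
proof -
  define v where "v = 1 + w / sqrt (Rr a b c d z)"
  have k0: "kap a b c d > 0" using l m by (simp add: kap_def)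
  have R0: "Rr a b c d z > 0" using l m z by (simp add: Rr_def)
  have s0: "sqrt z > 0" using z by simp
  have u: "kap a b c d * sqrt z + (kap a b c d * sqrt z / sqrt (Rr a b c d z)) * w = kap a b c d * sqrt z * v"
    unfolding v_def by (simp add: algebra_simps)
  show ?thesis
  proof (cases "v > 0")
    case False
    then have "kap a b c d * sqrt z * v \<le> 0" using k0 s0 by (simp add: mult_nonneg_nonpos)
    then show ?thesis using False unfolding u Hfun_def Fint_def v_def[symmetric] Let_def by simp
  next
    case True
    have "kap a b c d * sqrt z * v > 0" using k0 s0 True by simp
    then show ?thesis
      unfolding u Hfun_def Fint_def v_def[symmetric] Let_def using True
      using subst_id[OF a c l m z True v_def[unfolded Rr_def]]
      by (simp add: Pf_def kap_def Rr_def)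
  qed
qed

lemma G2:
  assumes z: "z > 0"
  shows "(LINT u|lborel. Fint p a b q c d z u) = Pf p a b q c d z * (LINT w|lborel. Hfun p a b q c d z w)"
    and "integrable lborel (Hfun p a b q c d z) \<Longrightarrow> integrable lborel (Fint p a b q c d z)"
proof -
  define A where "A = kap a b c d * sqrt z"
  define B where "B = kap a b c d * sqrt z / sqrt (Rr a b c d z)"
  have k0: "kap a b c d > 0" using l m by (simp add: kap_def)
  have R0: "Rr a b c d z > 0" using l m z by (simp add: Rr_def)
  have B0: "B > 0" using k0 R0 z by (simp add: B_def)
  have "(LINT u|lborel. Fint p a b q c d z u) = \<bar>B\<bar> *\<^sub>R (LINT w|lborel. Fint p a b q c d z (A + B * w))"
    using B0 by (intro lborel_integral_real_affine) simp
  also have "\<dots> = (LINT w|lborel. B * Fint p a b q c d z (A + B * w))" using B0 by simp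
  also have "\<dots> = (LINT w|lborel. Pf p a b q c d z * Hfun p a b q c d z w)"
    unfolding A_def B_def using G1[OF z] by simp
  also have "\<dots> = Pf p a b q c d z * (LINT w|lborel. Hfun p a b q c d z w)" by simp
  finally show "(LINT u|lborel. Fint p a b q c d z u) = Pf p a b q c d z * (LINT w|lborel. Hfun p a b q c d z w)" .
  assume "integrable lborel (Hfun p a b q c d z)"
  then have "integrable lborel (\<lambda>w. Pf p a b q c d z * Hfun p a b q c d z w)" by simp
  then have "integrable lborel (\<lambda>w. B * Fint p a b q c d z (A + B * w))"
    unfolding A_def B_def using G1[OF z] by simp
  then have "integrable lborel (\<lambda>w. Fint p a b q c d z (A + B * w))" using B0 by simp
  then show "integrable lborel (Fint p a b q c d z)"
    using lborel_integrable_real_affine_iff[of B "Fint p a b q c d z" A] B0 by simp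
qed

end

lemma gauss_full: "(LINT w|lborel. exp (-w\<^sup>2)) = sqrt pi"
  and gauss_full_int: "integrable lborel (\<lambda>w::real. exp (-w\<^sup>2))"
proof -
  define \<sigma> :: real where "\<sigma> = 1 / sqrt 2"
  have s0: "\<sigma> > 0" by (simp add: \<sigma>_def)
  have eq: "normal_density 0 \<sigma> w = (1 / sqrt pi) * exp (-w\<^sup>2)" for w
    unfolding normal_density_def \<sigma>_def by (simp add: power_divide)
  have "(LINT w|lborel. normal_density 0 \<sigma> w) = 1" using integral_normal_density[OF s0] .
  then have "(LINT w|lborel. (1 / sqrt pi) * exp (-w\<^sup>2)) = 1" unfolding eq .
  then show "(LINT w|lborel. exp (-w\<^sup>2)) = sqrt pi" by simp
  have "integrable lborel (normal_density 0 \<sigma>)" using integrable_normal_density[OF s0] .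
  then have "integrable lborel (\<lambda>w. (1 / sqrt pi) * exp (-w\<^sup>2))" unfolding eq .
  from integrable_mult_left[OF this, of "sqrt pi"]
  show "integrable lborel (\<lambda>w::real. exp (-w\<^sup>2))" by simp
qed

lemma H_bound_pt:
  fixes s R v w a c \<kappa> z e1 e2 C1 C2 r :: real and k1 k2 :: nat
  assumes s: "s \<ge> 1" and R: "R \<ge> 1" and vw: "v = 1 + w / sqrt R" and v: "v > 0"
    and a: "a > 0" and c: "c > 0" and k: "\<kappa> > 0" and z: "z = s * s"
    and e1: "0 \<le> e1" "e1 \<le> C1 * (1 + (1 / (a * (\<kappa> * s * v))) ^ k1)"
    and e2: "0 \<le> e2" "e2 \<le> C2 * (1 + (1 / (c * (z / (\<kappa> * s * v)))) ^ k2)"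
    and C1: "C1 \<ge> 0" and C2: "C2 \<ge> 0"
  shows "v powr r * exp (-(w\<^sup>2/v)) * e1 * e2 \<le>
    (C1 * (1 + (1/(a * \<kappa>)) ^ k1) * (C2 * (1 + (\<kappa>/c) ^ k2)) *
      (exp 1 * (2^(nat \<lceil>\<bar>r\<bar>\<rceil> + k1 + k2) + 8^(nat \<lceil>\<bar>r\<bar>\<rceil> + k1 + k2) * fact (nat \<lceil>\<bar>r\<bar>\<rceil> + k1 + k2)))) *
      ((1 + \<bar>w\<bar>^(nat \<lceil>\<bar>r\<bar>\<rceil> + k1 + k2)) * exp (-\<bar>w\<bar>))"
proof -
  define M where "M = max v (1/v)"
  define K0 where "K0 = nat \<lceil>\<bar>r\<bar>\<rceil>"
  have M1: "M \<ge> 1" unfolding M_def using v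
    by (cases "v \<ge> 1") (auto simp: le_max_iff_disj le_divide_eq)
  have Mv: "v \<le> M" "1/v \<le> M" unfolding M_def by auto
  have s0: "s > 0" using s by simp
  have b1: "e1 \<le> (C1 * (1 + (1/(a * \<kappa>)) ^ k1)) * M ^ k1"
  proof -
    have "(1 / (a * (\<kappa> * s * v))) ^ k1 = (1/(a * \<kappa>)) ^ k1 * (1/s) ^ k1 * (1/v) ^ k1"
      by (simp add: power_mult_distrib[symmetric] mult.assoc)
    also have "\<dots> \<le> (1/(a * \<kappa>)) ^ k1 * 1 * M ^ k1"
      using s0 s a k v Mv by (intro mult_mono power_mono) (auto simp: power_le_one)
    finally have "1 + (1 / (a * (\<kappa> * s * v))) ^ k1 \<le> 1 * M ^ k1 + (1/(a * \<kappa>)) ^ k1 * M ^ k1"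
      using one_le_power[OF M1, of k1] by linarith
    also have "\<dots> = (1 + (1/(a * \<kappa>)) ^ k1) * M ^ k1" by (simp add: algebra_simps)
    finally have "C1 * (1 + (1 / (a * (\<kappa> * s * v))) ^ k1) \<le> C1 * ((1 + (1/(a * \<kappa>)) ^ k1) * M ^ k1)"
      using C1 by (intro mult_left_mono) auto
    then show ?thesis using e1 by (simp add: mult.assoc)
  qed
  have b2: "e2 \<le> (C2 * (1 + (\<kappa>/c) ^ k2)) * M ^ k2"
  proof -
    have "1 / (c * (z / (\<kappa> * s * v))) = (\<kappa>/c) * (1/s) * v"
      using s0 v k c unfolding z by (simp add: field_simps)
    then have "(1 / (c * (z / (\<kappa> * s * v)))) ^ k2 = (\<kappa>/c) ^ k2 * (1/s) ^ k2 * v ^ k2"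
      by (simp only: power_mult_distrib)
    also have "\<dots> \<le> (\<kappa>/c) ^ k2 * 1 * M ^ k2"
      using s0 s c k v Mv by (intro mult_mono power_mono) (auto simp: power_le_one)
    finally have "1 + (1 / (c * (z / (\<kappa> * s * v)))) ^ k2 \<le> 1 * M ^ k2 + (\<kappa>/c) ^ k2 * M ^ k2"
      using one_le_power[OF M1, of k2] by linarith
    also have "\<dots> = (1 + (\<kappa>/c) ^ k2) * M ^ k2" by (simp add: algebra_simps)
    finally have "C2 * (1 + (1 / (c * (z / (\<kappa> * s * v)))) ^ k2) \<le> C2 * ((1 + (\<kappa>/c) ^ k2) * M ^ k2)"
      using C2 by (intro mult_left_mono) auto
    then show ?thesis using e2 by (simp add: mult.assoc)
  qed
  have b0: "v powr r \<le> M ^ K0" unfolding M_def K0_def using powr_le_M[OF v] .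
  have bx: "M ^ (K0 + k1 + k2) * exp (-(w\<^sup>2/v)) \<le> exp 1 * (2^(K0 + k1 + k2) + 8^(K0 + k1 + k2) * fact (K0 + k1 + k2)) *
      ((1 + \<bar>w\<bar>^(K0 + k1 + k2)) * exp (-\<bar>w\<bar>))"
    unfolding M_def by (rule M_exp_bound[OF R vw v])
  have "v powr r * exp (-(w\<^sup>2/v)) * e1 * e2 \<le> M ^ K0 * exp (-(w\<^sup>2/v)) * ((C1 * (1 + (1/(a * \<kappa>)) ^ k1)) * M ^ k1) *
      ((C2 * (1 + (\<kappa>/c) ^ k2)) * M ^ k2)"
    using b0 b1 b2 e1 e2 M1 C1 C2 by (intro mult_mono) auto
  also have "\<dots> = (C1 * (1 + (1/(a * \<kappa>)) ^ k1) * (C2 * (1 + (\<kappa>/c) ^ k2))) * (M ^ (K0 + k1 + k2) * exp (-(w\<^sup>2/v)))"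
    by (simp add: power_add algebra_simps)
  also have "\<dots> \<le> (C1 * (1 + (1/(a * \<kappa>)) ^ k1) * (C2 * (1 + (\<kappa>/c) ^ k2))) *
      (exp 1 * (2^(K0 + k1 + k2) + 8^(K0 + k1 + k2) * fact (K0 + k1 + k2)) * ((1 + \<bar>w\<bar>^(K0 + k1 + k2)) * exp (-\<bar>w\<bar>)))"
    using bx C1 C2 a c k by (intro mult_left_mono) auto
  finally show ?thesis unfolding K0_def by (simp add: mult.assoc)
qed

context
  fixes p a b q c d :: real
  assumes a: "a > 0" and c: "c > 0" and l: "a - b > 0" and m: "c - d > 0"
begin

lemma H_lim_pt: "((\<lambda>z. Hfun p a b q c d z w) \<longlongrightarrow> exp (-w\<^sup>2) * (pi/2)) at_top"
proof -
  define \<kappa> where "\<kappa> = kap a b c d"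
  define v where "v = (\<lambda>z. 1 + w / sqrt (Rr a b c d z))"
  have k0: "\<kappa> > 0" using l m by (simp add: kap_def \<kappa>_def)
  have lm: "sqrt ((a-b) * (c-d)) > 0" using l m by simp
  have LR: "filterlim (\<lambda>z. Rr a b c d z) at_top at_top"
    unfolding Rr_def by (rule filterlim_tendsto_pos_mult_at_top[OF tendsto_const lm sqrt_at_top])
  have LsR: "filterlim (\<lambda>z. sqrt (Rr a b c d z)) at_infinity at_top"
    by (rule filterlim_at_top_imp_at_infinity[OF filterlim_compose[OF sqrt_at_top LR]])
  have Lv: "(v \<longlongrightarrow> 1) at_top"
  proof -
    have "((\<lambda>z. w / sqrt (Rr a b c d z)) \<longlongrightarrow> 0) at_top"
      by (rule tendsto_divide_0[OF tendsto_const LsR])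
    from tendsto_add[OF tendsto_const[of 1] this] show ?thesis unfolding v_def by simp
  qed
  have ev_v: "\<forall>\<^sub>F z in at_top. v z > 0"
    using order_tendstoD(1)[OF Lv, of 0] by simp
  have L1: "filterlim (\<lambda>z. a * (\<kappa> * sqrt z * v z)) at_top at_top"
  proof -
    have "filterlim (\<lambda>z. (a * \<kappa> * v z) * sqrt z) at_top at_top"
      by (rule filterlim_tendsto_pos_mult_at_top[OF tendsto_mult[OF tendsto_const Lv]])
         (use a k0 in \<open>auto intro: sqrt_at_top\<close>)
    then show ?thesis by (simp add: ac_simps)
  qed
  have L2: "filterlim (\<lambda>z. c * (z / (\<kappa> * sqrt z * v z))) at_top at_top"
  proof -
    have "filterlim (\<lambda>z. (c / (\<kappa> * v z)) * sqrt z) at_top at_top"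
      by (rule filterlim_tendsto_pos_mult_at_top[OF tendsto_divide[OF tendsto_const tendsto_mult[OF tendsto_const Lv]]])
         (use c k0 in \<open>auto intro: sqrt_at_top\<close>)
    moreover have "\<forall>\<^sub>F z in at_top. (c / (\<kappa> * v z)) * sqrt z = c * (z / (\<kappa> * sqrt z * v z))"
      using ev_v eventually_gt_at_top[of "0::real"]
    proof eventually_elim
      case (elim z)
      have "z = sqrt z * sqrt z" using elim by simp
      then show ?case using elim k0 by (simp add: field_simps)
    qed
    ultimately show ?thesis by (rule iffD1[OF filterlim_cong[OF refl refl], rotated])
  qed
  have E: "((\<lambda>y. Ek \<nu> y) \<longlongrightarrow> sqrt (pi/2)) at_top" for \<nu>
    unfolding Ek_def by (rule Ek_lim)
  have lim: "((\<lambda>z. v z powr (p-q-1) * exp (-(w\<^sup>2 / v z)) * Ek p (a * (\<kappa> * sqrt z * v z)) *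
        Ek q (c * (z / (\<kappa> * sqrt z * v z)))) \<longlongrightarrow>
      1 powr (p-q-1) * exp (-(w\<^sup>2 / 1)) * sqrt (pi/2) * sqrt (pi/2)) at_top"
    by (intro tendsto_mult tendsto_powr Lv tendsto_const tendsto_exp tendsto_minus tendsto_divide
        filterlim_compose[OF E L1] filterlim_compose[OF E L2]) auto
  have "\<forall>\<^sub>F z in at_top. v z powr (p-q-1) * exp (-(w\<^sup>2 / v z)) * Ek p (a * (\<kappa> * sqrt z * v z)) *
        Ek q (c * (z / (\<kappa> * sqrt z * v z))) = Hfun p a b q c d z w"
    using ev_v by eventually_elim (simp add: Hfun_def v_def \<kappa>_def Let_def)
  from Lim_transform_eventually[OF lim this] show ?thesis by (simp add: mult.assoc)
qed

lemma H_nonneg: assumes z: "z \<ge> 0" shows "Hfun p a b q c d z w \<ge> 0"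
proof -
  define v where "v = 1 + w / sqrt (Rr a b c d z)"
  have k0: "kap a b c d > 0" using l m by (simp add: kap_def)
  show ?thesis
  proof (cases "v > 0")
    case False then show ?thesis unfolding Hfun_def Let_def v_def[symmetric] by simp
  next
    case True
    have "a * (kap a b c d * sqrt z * v) \<ge> 0" using a k0 z True by simp
    moreover have "c * (z / (kap a b c d * sqrt z * v)) \<ge> 0" using c k0 z True by simp
    ultimately show ?thesis unfolding Hfun_def Let_def v_def[symmetric] using True
      by (auto intro!: mult_nonneg_nonneg Ek_nonneg)
  qed
qed

lemma G4:
  shows "((\<lambda>z. LINT w|lborel. Hfun p a b q c d z w) \<longlongrightarrow> sqrt pi * (pi/2)) at_top"
    and "\<forall>\<^sub>F z in at_top. integrable lborel (Hfun p a b q c d z)"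
proof -
  obtain C1 and k1 :: nat where C1: "C1 \<ge> 0" "\<And>y. y > 0 \<Longrightarrow> Ek p y \<le> C1 * (1 + (1/y)^k1)"
    using Ek_bound[of p] by blast
  obtain C2 and k2 :: nat where C2: "C2 \<ge> 0" "\<And>y. y > 0 \<Longrightarrow> Ek q y \<le> C2 * (1 + (1/y)^k2)"
    using Ek_bound[of q] by blast
  define \<kappa> where "\<kappa> = kap a b c d"
  have k0: "\<kappa> > 0" using l m by (simp add: kap_def \<kappa>_def)
  define r where "r = p - q - 1"
  define K where "K = nat \<lceil>\<bar>r\<bar>\<rceil> + k1 + k2"
  define Cst where "Cst = (C1 * (1 + (1/(a * \<kappa>)) ^ k1) * (C2 * (1 + (\<kappa>/c) ^ k2)) *
      (exp 1 * (2^K + 8^K * fact K)))"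
  have Cst0: "Cst \<ge> 0" unfolding Cst_def using C1 C2 a c k0 by simp
  define G where "G = (\<lambda>w::real. Cst * ((1 + \<bar>w\<bar>^K) * exp (-\<bar>w\<bar>)))"
  have Gi: "integrable lborel G" unfolding G_def using G_integrable[of K] by simp
  define lm where "lm = (a-b) * (c-d)"
  have lm0: "lm > 0" using l m by (simp add: lm_def)
  have bound: "\<forall>\<^sub>F z in at_top. \<forall>w. norm (Hfun p a b q c d z w) \<le> G w"
    using eventually_ge_at_top[of "max 1 (1/lm)"]
  proof eventually_elim
    case (elim z)
    have z1: "z \<ge> 1" and zl: "z \<ge> 1/lm" using elim by auto
    have s1: "sqrt z \<ge> 1" using z1 by simp
    have "lm * z \<ge> 1" using zl lm0 by (simp add: field_simps)
    then have R1: "Rr a b c d z \<ge> 1" unfolding Rr_def lm_def[symmetric]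
      by (simp add: real_sqrt_mult[symmetric])
    show ?case
    proof
      fix w
      define v where "v = 1 + w / sqrt (Rr a b c d z)"
      show "norm (Hfun p a b q c d z w) \<le> G w"
      proof (cases "v > 0")
        case False
        then have "Hfun p a b q c d z w = 0" unfolding Hfun_def Let_def v_def[symmetric] by simp
        then show ?thesis using Cst0 unfolding G_def by simp
      next
        case True
        have s0: "sqrt z > 0" using s1 by simp
        have arg1: "a * (\<kappa> * sqrt z * v) > 0" using a k0 s0 True by simp
        have arg2: "c * (z / (\<kappa> * sqrt z * v)) > 0" using c k0 s0 True z1 by simp
        have "Hfun p a b q c d z w = v powr r * exp (-(w\<^sup>2/v)) * Ek p (a * (\<kappa> * sqrt z * v)) *
            Ek q (c * (z / (\<kappa> * sqrt z * v)))"
          unfolding Hfun_def Let_def v_def[symmetric] r_def \<kappa>_def using True by simp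
        also have "\<dots> \<le> G w"
          unfolding G_def Cst_def K_def
          by (rule H_bound_pt[OF s1 R1 v_def True a c k0 _ Ek_nonneg C1(2)[OF arg1] Ek_nonneg C2(2)[OF arg2] C1(1) C2(1)])
             (use z1 arg1 arg2 in auto)
        finally show ?thesis using H_nonneg[of z w] z1 by simp
      qed
    qed
  qed
  have lim: "((\<lambda>z. LINT w|lborel. Hfun p a b q c d z w) \<longlongrightarrow> (LINT w|lborel. exp (-w\<^sup>2) * (pi/2))) at_top"
  proof (rule integral_dominated_convergence_at_top[where w=G])
    show "(\<lambda>w::real. exp (-w\<^sup>2) * (pi/2)) \<in> borel_measurable lborel" by measurable
    show "\<And>t. Hfun p a b q c d t \<in> borel_measurable lborel" by measurable
    show "integrable lborel G" by (rule Gi)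
    show "AE w in lborel. ((\<lambda>i. Hfun p a b q c d i w) \<longlongrightarrow> exp (-w\<^sup>2) * (pi/2)) at_top"
      by (intro AE_I2 H_lim_pt)
    show "\<forall>\<^sub>F i in at_top. AE w in lborel. norm (Hfun p a b q c d i w) \<le> G w"
      using bound by eventually_elim auto
  qed
  then show "((\<lambda>z. LINT w|lborel. Hfun p a b q c d z w) \<longlongrightarrow> sqrt pi * (pi/2)) at_top"
    using gauss_full by simp
  show "\<forall>\<^sub>F z in at_top. integrable lborel (Hfun p a b q c d z)"
    using bound
  proof eventually_elim
    case (elim z)
    show ?case
    proof (rule Bochner_Integration.integrable_bound[OF Gi])
      show "Hfun p a b q c d z \<in> borel_measurable lborel" by measurable
      have "G w \<ge> 0" for w unfolding G_def using Cst0 by simp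
      then show "AE x in lborel. norm (Hfun p a b q c d z x) \<le> norm (G x)"
        using elim by (intro AE_I2) (simp add: abs_of_nonneg)
    qed
  qed
qed

lemma Pf_pos: "z > 0 \<Longrightarrow> Pf p a b q c d z > 0"
  unfolding Pf_def Rr_def kap_def using a c l m by simp

lemma G_main:
  shows "((\<lambda>z. (LINT u|lborel. Fint p a b q c d z u) / (Pf p a b q c d z * (sqrt pi * (pi/2)))) \<longlongrightarrow> 1) at_top"
    and "\<forall>\<^sub>F z in at_top. integrable lborel (Fint p a b q c d z)"
proof -
  have "((\<lambda>z. (LINT w|lborel. Hfun p a b q c d z w) / (sqrt pi * (pi/2))) \<longlongrightarrow> (sqrt pi * (pi/2)) / (sqrt pi * (pi/2))) at_top"
    by (intro tendsto_divide G4(1) tendsto_const) simp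
  moreover have "\<forall>\<^sub>F z in at_top. (LINT w|lborel. Hfun p a b q c d z w) / (sqrt pi * (pi/2)) =
      (LINT u|lborel. Fint p a b q c d z u) / (Pf p a b q c d z * (sqrt pi * (pi/2)))"
    using eventually_gt_at_top[of "0::real"]
  proof eventually_elim
    case (elim z)
    show ?case using Pf_pos[OF elim] by (simp add: G2(1)[OF a c l m elim])
  qed
  ultimately show "((\<lambda>z. (LINT u|lborel. Fint p a b q c d z u) / (Pf p a b q c d z * (sqrt pi * (pi/2)))) \<longlongrightarrow> 1) at_top"
    using Lim_transform_eventually by fastforce
  show "\<forall>\<^sub>F z in at_top. integrable lborel (Fint p a b q c d z)"
    using G4(2) eventually_gt_at_top[of "0::real"]
    by eventually_elim (rule G2(2)[OF a c l m])
qed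

end

lemma ln_inj_pos: "x > 0 \<Longrightarrow> y > 0 \<Longrightarrow> ln x = ln (y::real) \<Longrightarrow> x = y"
  by simp

lemma key_alg:
  fixes m n a1 a2 b1 b2 X1 X2 z :: real
  assumes m: "m > -1/2" and n: "n > -1/2" and a1: "a1 > 0" and a2: "a2 > 0" and X1: "X1 > 0" and X2: "X2 > 0"
    and L1: "a1 - b1 > 0" and L2: "a2 - b2 > 0" and z: "z > 0"
  shows "(X1 powr (m+1/2) / (sqrt pi * (2 * a1) powr m * Gamma (m+1/2))) *
         (X2 powr (n+1/2) / (sqrt pi * (2 * a2) powr n * Gamma (n+1/2))) *
         (Pf m a1 b1 n a2 b2 z * (sqrt pi * (pi/2)))
   = (sqrt pi * sqrt X1 powr (2 * m+1) * sqrt X2 powr (2 * n+1) /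
        ((2 * a1) powr (m+1/2) * (2 * a2) powr (n+1/2) * Gamma (m+1/2) * Gamma (n+1/2))) *
     z powr ((2 * m+2 * n-3)/4) *
     ((a1-b1) powr ((2 * n-2 * m-1)/4) * (a2-b2) powr ((2 * m-2 * n-1)/4) * exp (-2 * sqrt ((a1-b1) * (a2-b2) * z)))"
proof (rule ln_inj_pos)
  have g1: "Gamma (m+1/2) > 0" using m by simp
  have g2: "Gamma (n+1/2) > 0" using n by simp
  have pi0: "pi > 0" by simp
  note pos = g1 g2 pi0 a1 a2 X1 X2 L1 L2 z
  show "0 < (X1 powr (m+1/2) / (sqrt pi * (2 * a1) powr m * Gamma (m+1/2))) *
         (X2 powr (n+1/2) / (sqrt pi * (2 * a2) powr n * Gamma (n+1/2))) *
         (Pf m a1 b1 n a2 b2 z * (sqrt pi * (pi/2)))"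
    using pos by (simp add: Pf_def kap_def Rr_def)
  show "0 < (sqrt pi * sqrt X1 powr (2 * m+1) * sqrt X2 powr (2 * n+1) /
        ((2 * a1) powr (m+1/2) * (2 * a2) powr (n+1/2) * Gamma (m+1/2) * Gamma (n+1/2))) *
     z powr ((2 * m+2 * n-3)/4) *
     ((a1-b1) powr ((2 * n-2 * m-1)/4) * (a2-b2) powr ((2 * m-2 * n-1)/4) * exp (-2 * sqrt ((a1-b1) * (a2-b2) * z)))"
    using pos by simp
  show "ln ((X1 powr (m+1/2) / (sqrt pi * (2 * a1) powr m * Gamma (m+1/2))) *
         (X2 powr (n+1/2) / (sqrt pi * (2 * a2) powr n * Gamma (n+1/2))) *
         (Pf m a1 b1 n a2 b2 z * (sqrt pi * (pi/2))))
   = ln ((sqrt pi * sqrt X1 powr (2 * m+1) * sqrt X2 powr (2 * n+1) /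
        ((2 * a1) powr (m+1/2) * (2 * a2) powr (n+1/2) * Gamma (m+1/2) * Gamma (n+1/2))) *
     z powr ((2 * m+2 * n-3)/4) *
     ((a1-b1) powr ((2 * n-2 * m-1)/4) * (a2-b2) powr ((2 * m-2 * n-1)/4) * exp (-2 * sqrt ((a1-b1) * (a2-b2) * z))))"
    using pos
    apply (simp add: Pf_def kap_def Rr_def ln_mult ln_div ln_powr ln_sqrt real_sqrt_mult)
    by (simp add: field_simps)
qed

definition vgN :: "real \<Rightarrow> real \<Rightarrow> real \<Rightarrow> real" where
  "vgN \<mu> \<alpha> \<beta> = (\<alpha>\<^sup>2 - \<beta>\<^sup>2) powr (\<mu> + 1/2) / (sqrt pi * (2 * \<alpha>) powr \<mu> * Gamma (\<mu> + 1/2))"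

lemma vgN_neg[simp]: "vgN \<mu> \<alpha> (-\<beta>) = vgN \<mu> \<alpha> \<beta>"
  by (simp add: vgN_def)

lemma vg_pos: "x > 0 \<Longrightarrow> vg_pdf \<mu> \<alpha> \<beta> x = vgN \<mu> \<alpha> \<beta> * (exp (\<beta> * x) * x powr \<mu> * besselK \<mu> (\<alpha> * x))"
  by (simp add: vg_pdf_def vgN_def)

lemma vg_neg: assumes "x > 0" shows "vg_pdf \<mu> \<alpha> \<beta> (-x) = vgN \<mu> \<alpha> \<beta> * (exp ((-\<beta>) * x) * x powr \<mu> * besselK \<mu> (\<alpha> * x))"
proof -
  have "\<bar>-x\<bar> = x" using assms by simp
  moreover have "\<beta> * (-x) = (-\<beta>) * x" by simp
  ultimately show ?thesis unfolding vg_pdf_def vgN_def by (simp only: mult.assoc)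
qed

lemma split_gen:
  assumes z: "z > 0" and s: "s = 1 \<or> s = -1"
  shows "vg_pdf m \<alpha>1 \<beta>1 x * vg_pdf n \<alpha>2 \<beta>2 (s * z / x) / \<bar>x\<bar> =
    vgN m \<alpha>1 \<beta>1 * vgN n \<alpha>2 \<beta>2 * (Fint m \<alpha>1 \<beta>1 n \<alpha>2 (s * \<beta>2) z x + Fint m \<alpha>1 (-\<beta>1) n \<alpha>2 (-(s * \<beta>2)) z (-x))"
proof -
  consider "x > 0" | "x < 0" | "x = 0" by linarith
  then show ?thesis
  proof cases
    case 1
    have zx: "z / x > 0" using z 1 by simp
    have v2: "vg_pdf n \<alpha>2 \<beta>2 (s * z / x) = vgN n \<alpha>2 \<beta>2 * (exp ((s * \<beta>2) * (z/x)) * (z/x) powr n * besselK n (\<alpha>2 * (z/x)))"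
      using s
    proof
      assume "s = 1" then show ?thesis using vg_pos[OF zx] by simp
    next
      assume "s = -1" then show ?thesis using vg_neg[OF zx, of n \<alpha>2 \<beta>2] by simp
    qed
    show ?thesis using 1 unfolding v2 vg_pos[OF 1] Fint_def by (simp add: mult_ac)
  next
    case 2
    define u where "u = -x"
    have u: "u > 0" using 2 by (simp add: u_def)
    have x: "x = -u" by (simp add: u_def)
    have zu: "z / u > 0" using z u by simp
    have v2: "vg_pdf n \<alpha>2 \<beta>2 (s * z / x) = vgN n \<alpha>2 \<beta>2 * (exp ((-(s * \<beta>2)) * (z/u)) * (z/u) powr n * besselK n (\<alpha>2 * (z/u)))"
      using s
    proof
      assume "s = 1" then show ?thesis using vg_neg[OF zu, of n \<alpha>2 \<beta>2] by (simp add: x)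
    next
      assume "s = -1" then show ?thesis using vg_pos[OF zu, of n \<alpha>2 \<beta>2] by (simp add: x)
    qed
    show ?thesis unfolding v2 unfolding x using u vg_neg[OF u, of m \<alpha>1 \<beta>1] unfolding Fint_def
      by (simp add: mult_ac)
  next
    case 3
    then show ?thesis by (simp add: Fint_def)
  qed
qed

lemma integral_split:
  fixes F1 F2 g :: "real \<Rightarrow> real"
  assumes i1: "integrable lborel F1" and i2: "integrable lborel F2" and g: "\<And>x. g x = N * (F1 x + F2 (-x))"
  shows "(LINT x|lborel. g x) = N * ((LINT x|lborel. F1 x) + (LINT x|lborel. F2 x))"
proof -
  have i2': "integrable lborel (\<lambda>x. F2 (0 + (-1) * x))" using lborel_integrable_real_affine[OF i2, of "-1" 0] by simp
  have e2: "(LINT x|lborel. F2 x) = (LINT x|lborel. F2 (0 + (-1) * x))"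
    using lborel_integral_real_affine[of "-1" F2 0] by simp
  show ?thesis unfolding g e2 using i1 i2' by simp
qed

lemma two_terms:
  fixes J1 J2 T1 T2 :: "'a \<Rightarrow> real"
  assumes l1: "((\<lambda>x. J1 x / T1 x) \<longlongrightarrow> 1) F" and l2: "((\<lambda>x. J2 x / T2 x) \<longlongrightarrow> 1) F"
    and p1: "\<forall>\<^sub>F x in F. T1 x > 0" and p2: "\<forall>\<^sub>F x in F. T2 x > 0"
  shows "((\<lambda>x. (J1 x + J2 x) / (T1 x + T2 x)) \<longlongrightarrow> 1) F"
proof -
  have "((\<lambda>x. \<bar>J1 x / T1 x - 1\<bar> + \<bar>J2 x / T2 x - 1\<bar>) \<longlongrightarrow> \<bar>1 - 1\<bar> + \<bar>1 - 1\<bar>) F"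
    by (intro tendsto_intros l1 l2)
  then have z: "((\<lambda>x. \<bar>J1 x / T1 x - 1\<bar> + \<bar>J2 x / T2 x - 1\<bar>) \<longlongrightarrow> 0) F" by simp
  have "((\<lambda>x. (J1 x + J2 x) / (T1 x + T2 x) - 1) \<longlongrightarrow> 0) F"
  proof (rule Lim_null_comparison[OF _ z])
    show "\<forall>\<^sub>F x in F. norm ((J1 x + J2 x) / (T1 x + T2 x) - 1) \<le> \<bar>J1 x / T1 x - 1\<bar> + \<bar>J2 x / T2 x - 1\<bar>"
      using p1 p2
    proof eventually_elim
      case (elim x)
      define w1 where "w1 = T1 x / (T1 x + T2 x)"
      define w2 where "w2 = T2 x / (T1 x + T2 x)"
      have w: "0 \<le> w1" "w1 \<le> 1" "0 \<le> w2" "w2 \<le> 1" using elim by (auto simp: w1_def w2_def field_simps)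
      have eq: "(J1 x + J2 x) / (T1 x + T2 x) - 1 = (J1 x / T1 x - 1) * w1 + (J2 x / T2 x - 1) * w2"
      proof -
        have S: "T1 x + T2 x > 0" using elim by simp
        have e1: "(J1 x / T1 x - 1) * w1 = (J1 x - T1 x) / (T1 x + T2 x)"
          using elim S unfolding w1_def by (simp add: divide_simps)
        have e2: "(J2 x / T2 x - 1) * w2 = (J2 x - T2 x) / (T1 x + T2 x)"
          using elim S unfolding w2_def by (simp add: divide_simps)
        have "(J1 x + J2 x) / (T1 x + T2 x) - 1 = ((J1 x - T1 x) + (J2 x - T2 x)) / (T1 x + T2 x)"
          using S by (simp add: divide_simps)
        also have "\<dots> = (J1 x - T1 x) / (T1 x + T2 x) + (J2 x - T2 x) / (T1 x + T2 x)"
          by (rule add_divide_distrib)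
        finally show ?thesis unfolding e1 e2 .
      qed
      have "\<bar>(J1 x / T1 x - 1) * w1\<bar> \<le> \<bar>J1 x / T1 x - 1\<bar>" using w by (simp add: abs_mult mult_left_le)
      moreover have "\<bar>(J2 x / T2 x - 1) * w2\<bar> \<le> \<bar>J2 x / T2 x - 1\<bar>" using w by (simp add: abs_mult mult_left_le)
      ultimately show ?case unfolding eq by simp
    qed
  qed
  then show ?thesis using Lim_null by blast
qed

theorem mainTheorem9:
  fixes m n \<alpha>1 \<alpha>2 \<beta>1 \<beta>2 :: real
  assumes "m > -1/2" "n > -1/2" "\<alpha>1 > 0" "\<alpha>2 > 0"
    "\<bar>\<beta>1\<bar> < \<alpha>1" "\<bar>\<beta>2\<bar> < \<alpha>2"
  defines "l1m \<equiv> \<alpha>1 - \<beta>1" and "l1p \<equiv> \<alpha>1 + \<beta>1"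
    and "l2m \<equiv> \<alpha>2 - \<beta>2" and "l2p \<equiv> \<alpha>2 + \<beta>2"
    and "fZ \<equiv> product_pdf (vg_pdf m \<alpha>1 \<beta>1) (vg_pdf n \<alpha>2 \<beta>2)"
    and "D \<equiv> sqrt pi * sqrt (\<alpha>1\<^sup>2 - \<beta>1\<^sup>2) powr (2 * m+1) * sqrt (\<alpha>2\<^sup>2 - \<beta>2\<^sup>2) powr (2 * n+1) /
              ((2 * \<alpha>1) powr (m+1/2) * (2 * \<alpha>2) powr (n+1/2) * Gamma (m+1/2) * Gamma (n+1/2))"
  shows "(fZ \<sim>[at_top] (\<lambda>z. D * z powr ((2 * m+2 * n-3)/4) *
            (l1m powr ((2 * n-2 * m-1)/4) * l2m powr ((2 * m-2 * n-1)/4) * exp (-2 * sqrt (l1m * l2m * z))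
           + l1p powr ((2 * n-2 * m-1)/4) * l2p powr ((2 * m-2 * n-1)/4) * exp (-2 * sqrt (l1p * l2p * z))))) \<and>
         (
         fZ \<sim>[at_bot] (\<lambda>z. D * (-z) powr ((2 * m+2 * n-3)/4) *
            (l1m powr ((2 * n-2 * m-1)/4) * l2p powr ((2 * m-2 * n-1)/4) * exp (-2 * sqrt (- l1m * l2p * z))
           + l1p powr ((2 * n-2 * m-1)/4) * l2m powr ((2 * m-2 * n-1)/4) * exp (-2 * sqrt (- l1p * l2m * z)))))"
proof -
  note hyps = assms
  have m: "m > -1/2" and n: "n > -1/2" and a1: "\<alpha>1 > 0" and a2: "\<alpha>2 > 0"
    and b1: "\<bar>\<beta>1\<bar> < \<alpha>1" and b2: "\<bar>\<beta>2\<bar> < \<alpha>2" using hyps by auto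
  have l1a: "\<alpha>1 - \<beta>1 > 0" "\<alpha>1 - - \<beta>1 > 0" using b1 by auto
  have l2a: "\<alpha>2 - \<beta>2 > 0" "\<alpha>2 - - \<beta>2 > 0" using b2 by auto
  have X1: "\<alpha>1\<^sup>2 - \<beta>1\<^sup>2 > 0"
  proof -
    have "\<bar>\<beta>1\<bar>\<^sup>2 < \<alpha>1\<^sup>2" using b1 by (intro power_strict_mono) auto
    then show ?thesis by simp
  qed
  have X2: "\<alpha>2\<^sup>2 - \<beta>2\<^sup>2 > 0"
  proof -
    have "\<bar>\<beta>2\<bar>\<^sup>2 < \<alpha>2\<^sup>2" using b2 by (intro power_strict_mono) auto
    then show ?thesis by simp
  qed
  define N where "N = vgN m \<alpha>1 \<beta>1 * vgN n \<alpha>2 \<beta>2"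
  have N0: "N > 0" unfolding N_def vgN_def using X1 X2 m n a1 a2 by simp
  define c0 where "c0 = sqrt pi * (pi/2)"
  define J where "J = (\<lambda>b1 b2 z. LINT u|lborel. Fint m \<alpha>1 b1 n \<alpha>2 b2 z u)"
  define T where "T = (\<lambda>b1 b2 z. Pf m \<alpha>1 b1 n \<alpha>2 b2 z * c0)"
  have GM: "((\<lambda>z. J b1 b2 z / T b1 b2 z) \<longlongrightarrow> 1) at_top \<and> (\<forall>\<^sub>F z in at_top. integrable lborel (Fint m \<alpha>1 b1 n \<alpha>2 b2 z))
      \<and> (\<forall>\<^sub>F z in at_top. T b1 b2 z > 0)"
    if "\<alpha>1 - b1 > 0" "\<alpha>2 - b2 > 0" for b1 b2
  proof (intro conjI)
    show "((\<lambda>z. J b1 b2 z / T b1 b2 z) \<longlongrightarrow> 1) at_top"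
      unfolding J_def T_def c0_def
      by (rule G_main(1)[where p=m and q=n, OF a1 a2 that])
    show "\<forall>\<^sub>F z in at_top. integrable lborel (Fint m \<alpha>1 b1 n \<alpha>2 b2 z)"
      by (rule G_main(2)[where p=m and q=n, OF a1 a2 that])
    show "\<forall>\<^sub>F z in at_top. T b1 b2 z > 0"
      using eventually_gt_at_top[of "0::real"]
      by eventually_elim (use Pf_pos[where p=m and q=n, OF a1 a2 that] in \<open>simp add: T_def c0_def\<close>)
  qed
  have GMi: "\<forall>\<^sub>F z in at_top. integrable lborel (Fint m \<alpha>1 b1 n \<alpha>2 b2 z)"
    if "\<alpha>1 - b1 > 0" "\<alpha>2 - b2 > 0" for b1 b2 using GM[OF that] by blast
  have KA: "N * T b1 b2 z = D * z powr ((2 * m+2 * n-3)/4) *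
      ((\<alpha>1 - b1) powr ((2 * n-2 * m-1)/4) * (\<alpha>2 - b2) powr ((2 * m-2 * n-1)/4) * exp (-2 * sqrt ((\<alpha>1 - b1) * (\<alpha>2 - b2) * z)))"
    if "\<alpha>1 - b1 > 0" "\<alpha>2 - b2 > 0" "z > 0" for b1 b2 z
    unfolding N_def vgN_def T_def c0_def D_def
    using key_alg[OF m n a1 a2 X1 X2 that] by (simp add: mult.assoc)
  have FZ: "fZ (s * z) = N * (J \<beta>1 (s * \<beta>2) z + J (-\<beta>1) (-(s * \<beta>2)) z)"
    if z: "z > 0" and s: "s = 1 \<or> s = -1" and i1: "integrable lborel (Fint m \<alpha>1 \<beta>1 n \<alpha>2 (s * \<beta>2) z)"
      and i2: "integrable lborel (Fint m \<alpha>1 (-\<beta>1) n \<alpha>2 (-(s * \<beta>2)) z)" for s z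
  proof -
    have "fZ (s * z) = (LINT x|lborel. vg_pdf m \<alpha>1 \<beta>1 x * vg_pdf n \<alpha>2 \<beta>2 (s * z / x) / \<bar>x\<bar>)"
      unfolding fZ_def product_pdf_def by simp
    also have "\<dots> = N * (J \<beta>1 (s * \<beta>2) z + J (-\<beta>1) (-(s * \<beta>2)) z)"
      unfolding J_def N_def
      by (rule integral_split[OF i1 i2 split_gen[OF z s]])
    finally show ?thesis .
  qed
  show ?thesis
  proof
    define tg where "tg = (\<lambda>z. D * z powr ((2 * m+2 * n-3)/4) *
            (l1m powr ((2 * n-2 * m-1)/4) * l2m powr ((2 * m-2 * n-1)/4) * exp (-2 * sqrt (l1m * l2m * z))
           + l1p powr ((2 * n-2 * m-1)/4) * l2p powr ((2 * m-2 * n-1)/4) * exp (-2 * sqrt (l1p * l2p * z))))"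
    note g1 = GM[OF l1a(1) l2a(1)] and g2 = GM[OF l1a(2) l2a(2)]
    have lim: "((\<lambda>z. (J \<beta>1 \<beta>2 z + J (-\<beta>1) (-\<beta>2) z) / (T \<beta>1 \<beta>2 z + T (-\<beta>1) (-\<beta>2) z)) \<longlongrightarrow> 1) at_top"
      using g1 g2 by (intro two_terms) auto
    have ev: "\<forall>\<^sub>F z in at_top. (J \<beta>1 \<beta>2 z + J (-\<beta>1) (-\<beta>2) z) / (T \<beta>1 \<beta>2 z + T (-\<beta>1) (-\<beta>2) z) = fZ z / tg z"
      using GMi[OF l1a(1) l2a(1)] GMi[OF l1a(2) l2a(2)] eventually_gt_at_top[of "0::real"]
    proof eventually_elim
      case (elim z)
      have f: "fZ z = N * (J \<beta>1 \<beta>2 z + J (-\<beta>1) (-\<beta>2) z)"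
        using FZ[of z 1] elim by simp
      have t: "tg z = N * T \<beta>1 \<beta>2 z + N * T (-\<beta>1) (-\<beta>2) z"
        unfolding tg_def KA[OF l1a(1) l2a(1) elim(3)] KA[OF l1a(2) l2a(2) elim(3)]
        by (simp add: l1m_def l2m_def l1p_def l2p_def algebra_simps)
      show ?case unfolding f t using N0 by (simp add: distrib_left[symmetric])
    qed
    show "fZ \<sim>[at_top] tg"
      by (rule asymp_equivI') (rule Lim_transform_eventually[OF lim ev])
  next
    define tg where "tg = (\<lambda>z. D * (-z) powr ((2 * m+2 * n-3)/4) *
            (l1m powr ((2 * n-2 * m-1)/4) * l2p powr ((2 * m-2 * n-1)/4) * exp (-2 * sqrt (- l1m * l2p * z))
           + l1p powr ((2 * n-2 * m-1)/4) * l2m powr ((2 * m-2 * n-1)/4) * exp (-2 * sqrt (- l1p * l2m * z))))"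
    note g1 = GM[OF l1a(1) l2a(2)] and g2 = GM[OF l1a(2) l2a(1)]
    have lim: "((\<lambda>z. (J \<beta>1 (-\<beta>2) z + J (-\<beta>1) \<beta>2 z) / (T \<beta>1 (-\<beta>2) z + T (-\<beta>1) \<beta>2 z)) \<longlongrightarrow> 1) at_top"
      using g1 g2 by (intro two_terms) auto
    have ev: "\<forall>\<^sub>F z in at_top. (J \<beta>1 (-\<beta>2) z + J (-\<beta>1) \<beta>2 z) / (T \<beta>1 (-\<beta>2) z + T (-\<beta>1) \<beta>2 z) = fZ (-z) / tg (-z)"
      using GMi[OF l1a(1) l2a(2)] GMi[OF l1a(2) l2a(1)] eventually_gt_at_top[of "0::real"]
    proof eventually_elim
      case (elim z)
      have f: "fZ (-z) = N * (J \<beta>1 (-\<beta>2) z + J (-\<beta>1) \<beta>2 z)"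
        using FZ[of z "-1"] elim by simp
      have t: "tg (-z) = N * T \<beta>1 (-\<beta>2) z + N * T (-\<beta>1) \<beta>2 z"
        unfolding tg_def KA[OF l1a(1) l2a(2) elim(3)] KA[OF l1a(2) l2a(1) elim(3)]
        by (simp add: l1m_def l2m_def l1p_def l2p_def algebra_simps)
      show ?case unfolding f t using N0 by (simp add: distrib_left[symmetric])
    qed
    have "((\<lambda>z. fZ (-z) / tg (-z)) \<longlongrightarrow> 1) at_top" by (rule Lim_transform_eventually[OF lim ev])
    then have "((\<lambda>z. fZ z / tg z) \<longlongrightarrow> 1) at_bot" by (simp add: filterlim_at_bot_mirror)
    then show "fZ \<sim>[at_bot] tg" by (rule asymp_equivI')
  qed
qed


end
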